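(* There is an absolute constant $C$ such that for every $r\ge2$ and every graphic matroid $M$ of rank $r$ on ground set $[n]$ (for any $n$), $R^{lin}_{1/3}(rank_M)\le C r^2\log r$.
   Context: A graphic matroid $M(G)$ of a (multi)graph $G$ whose edges are identified with $[n]$ has as independent sets exactly the edge sets forming forests; its rank function is $rank_M(S)=\max\{|I|: I\subseteq S, I \text{ independent}\}$, viewed as a function on $\mathbb F_2^n$ by identifying $x$ with $\{i:x_i=1\}$; its rank is $rank_M([n])$. For $S\subseteq[n]$, $\chi_S(x)=\sum_{i\in S}x_i\pmod2$. Exact randomized $\mathbb F_2$-sketch complexity: for $f\colon\mathbb F_2^n\to\mathbb R$ and $\delta\in[0,1]$, $R^{lin}_\delta(f)$ is the smallest integer $k$ such that there exists a probability distribution over $k$-tuples of subsets $\mathbf S_1,\dots,\mathbf S_k\subseteq[n]$ and a function $g\colon\mathbb F_2^k\to\mathbb R$ with $\Pr_{\mathbf S_1,\dots,\mathbf S_k}[g(\chi_{\mathbf S_1}(x),\dots,\chi_{\mathbf S_k}(x))=f(x)]\ge1-\delta$ for every $x\in\mathbb F_2^n$. *)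

theory Defs
  imports "HOL-Probability.Probability"
begin

text \<open>A multigraph with edges identified with [n] = {0..<n}: edge i has endpoints G i
  (an unordered pair represented by an ordered pair; loops allowed, parallel edges allowed).\<close>

type_synonym multigraph = "nat \<Rightarrow> nat \<times> nat"

definition edge_joins :: "multigraph \<Rightarrow> nat \<Rightarrow> nat \<Rightarrow> nat \<Rightarrow> bool" where
  "edge_joins G i u v \<longleftrightarrow> G i = (u, v) \<or> G i = (v, u)"

definition has_cycle :: "multigraph \<Rightarrow> nat set \<Rightarrow> bool" where
  "has_cycle G S \<longleftrightarrow> (\<exists>es vs. es \<noteq> [] \<and> length vs = length es \<and> distinct es \<and> distinct vs
      \<and> set es \<subseteq> S
      \<and> (\<forall>j < length es. edge_joins G (es ! j) (vs ! j) (vs ! ((j + 1) mod length es))))"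

definition graphic_indep :: "nat \<Rightarrow> multigraph \<Rightarrow> nat set \<Rightarrow> bool" where
  "graphic_indep n G I \<longleftrightarrow> I \<subseteq> {0..<n} \<and> \<not> has_cycle G I"

text \<open>Rank function of M(G), viewed on F_2^n by identifying x with {i. x_i = 1}.\<close>
definition graphic_rank :: "nat \<Rightarrow> multigraph \<Rightarrow> nat set \<Rightarrow> nat" where
  "graphic_rank n G S = Max {card I | I. I \<subseteq> S \<and> graphic_indep n G I}"

definition matroid_rank :: "nat \<Rightarrow> multigraph \<Rightarrow> nat" where
  "matroid_rank n G = graphic_rank n G {0..<n}"

text \<open>chi_S(x) for x \<in> F_2^n given as the set X of coordinates equal to 1 (True = 1).\<close>
definition chi :: "nat set \<Rightarrow> nat set \<Rightarrow> bool" where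
  "chi S X = odd (card (S \<inter> X))"

text \<open>A randomized F_2-sketch of size k for f: a distribution D over k-tuples (lists of
  length k) of subsets of [n] and a decoder g : F_2^k \<rightarrow> R, correct with probability
  \<ge> 1 - \<delta> on every input x \<in> F_2^n.\<close>
definition sketch_exists :: "nat \<Rightarrow> (nat set \<Rightarrow> real) \<Rightarrow> real \<Rightarrow> nat \<Rightarrow> bool" where
  "sketch_exists n f \<delta> k \<longleftrightarrow> (\<exists>(D :: nat set list pmf) (g :: bool list \<Rightarrow> real).
      (\<forall>Ss \<in> set_pmf D. length Ss = k \<and> (\<forall>S \<in> set Ss. S \<subseteq> {0..<n}))
      \<and> (\<forall>X. X \<subseteq> {0..<n} \<longrightarrow>
           measure_pmf.prob D {Ss. g (map (\<lambda>S. chi S X) Ss) = f X} \<ge> 1 - \<delta>))"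

definition R_lin :: "nat \<Rightarrow> (nat set \<Rightarrow> real) \<Rightarrow> real \<Rightarrow> nat" where
  "R_lin n f \<delta> = (LEAST k. sketch_exists n f \<delta> k)"

end

theory Submission
  imports Defs
begin


definition keyf :: "multigraph \<Rightarrow> nat \<Rightarrow> nat \<times> nat" where
  "keyf G i = (min (fst (G i)) (snd (G i)), max (fst (G i)) (snd (G i)))"

definition isloop :: "multigraph \<Rightarrow> nat \<Rightarrow> bool" where
  "isloop G i \<longleftrightarrow> fst (G i) = snd (G i)"

lemma has_cycle_mono: "has_cycle G S \<Longrightarrow> S \<subseteq> T \<Longrightarrow> has_cycle G T"
  unfolding has_cycle_def by blast

lemma loop_cycle: "isloop G i \<Longrightarrow> has_cycle G {i}"
  unfolding has_cycle_def isloop_def edge_joins_def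
  apply (rule exI[of _ "[i]"], rule exI[of _ "[fst (G i)]"])
  by (cases "G i") auto

lemma keyf_eq: "keyf G i = keyf G i' \<Longrightarrow> G i' = G i \<or> G i' = prod.swap (G i)"
  unfolding keyf_def by (cases "G i"; cases "G i'") (auto simp: min_def max_def split: if_splits)

lemma edge_joins_key: "keyf G i = keyf G i' \<Longrightarrow> edge_joins G i u v = edge_joins G i' u v"
  using keyf_eq[of G i i'] unfolding edge_joins_def by (cases "G i") auto

lemma par_cycle: "i \<noteq> i' \<Longrightarrow> keyf G i = keyf G i' \<Longrightarrow> has_cycle G {i, i'}"
proof (cases "isloop G i")
  case True
  then show ?thesis using loop_cycle has_cycle_mono by blast
next
  case False
  assume ne: "i \<noteq> i'" and k: "keyf G i = keyf G i'"
  obtain a b where ab: "G i = (a, b)" by (cases "G i")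
  with False have "a \<noteq> b" by (simp add: isloop_def)
  have j1: "edge_joins G i a b" using ab by (simp add: edge_joins_def)
  have j2: "edge_joins G i' b a" using keyf_eq[OF k] ab by (auto simp: edge_joins_def)
  show ?thesis unfolding has_cycle_def
    apply (rule exI[of _ "[i, i']"], rule exI[of _ "[a, b]"])
    using ne \<open>a \<noteq> b\<close> j1 j2 by (auto simp: less_Suc_eq)
qed

lemma no_cycle_empty: "\<not> has_cycle G {}"
  unfolding has_cycle_def by auto

lemma rank_set_finite: "finite {card I | I. I \<subseteq> S \<and> graphic_indep n G I}"
proof -
  have "{card I | I. I \<subseteq> S \<and> graphic_indep n G I} \<subseteq> card ` Pow {0..<n}"
    by (auto simp: graphic_indep_def)
  then show ?thesis using finite_surj by blast
qed

lemma rank_set_ne: "{card I | I. I \<subseteq> S \<and> graphic_indep n G I} \<noteq> {}"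
  using no_cycle_empty[of G] by (auto simp: graphic_indep_def)

lemma rank_attained: "\<exists>I. I \<subseteq> S \<and> graphic_indep n G I \<and> card I = graphic_rank n G S"
proof -
  have "graphic_rank n G S \<in> {card I | I. I \<subseteq> S \<and> graphic_indep n G I}"
    unfolding graphic_rank_def using rank_set_finite rank_set_ne by (rule Max_in)
  then show ?thesis by auto
qed

lemma rank_ge: "I \<subseteq> S \<Longrightarrow> graphic_indep n G I \<Longrightarrow> card I \<le> graphic_rank n G S"
  unfolding graphic_rank_def by (rule Max_ge[OF rank_set_finite]) auto

lemma indep_noloop: "graphic_indep n G I \<Longrightarrow> i \<in> I \<Longrightarrow> \<not> isloop G i"
  using loop_cycle has_cycle_mono unfolding graphic_indep_def by blast

lemma rank_mono_key:
  assumes Y: "Y \<subseteq> {0..<n}"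
    and cov: "\<forall>i\<in>X. i < n \<longrightarrow> \<not> isloop G i \<longrightarrow> (\<exists>i'\<in>Y. keyf G i' = keyf G i)"
  shows "graphic_rank n G X \<le> graphic_rank n G Y"
proof -
  obtain I where I: "I \<subseteq> X" "graphic_indep n G I" "card I = graphic_rank n G X"
    using rank_attained by blast
  define \<phi> where "\<phi> i = (SOME i'. i' \<in> Y \<and> keyf G i' = keyf G i)" for i
  have \<phi>: "\<phi> i \<in> Y \<and> keyf G (\<phi> i) = keyf G i" if "i \<in> I" for i
  proof -
    have "i < n" using I(2) that by (auto simp: graphic_indep_def)
    moreover have "\<not> isloop G i" using indep_noloop[OF I(2) that] .
    ultimately have "\<exists>i'. i' \<in> Y \<and> keyf G i' = keyf G i" using cov I(1) that by blast
    then show ?thesis unfolding \<phi>_def by (rule someI_ex)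
  qed
  have nc: "\<not> has_cycle G I" using I(2) by (simp add: graphic_indep_def)
  have inj: "inj_on \<phi> I"
  proof (rule inj_onI, rule ccontr)
    fix i i' assume a: "i \<in> I" "i' \<in> I" "\<phi> i = \<phi> i'" "i \<noteq> i'"
    then have "keyf G i = keyf G i'" using \<phi>[of i] \<phi>[of i'] by simp
    then have "has_cycle G {i, i'}" using par_cycle a(4) by blast
    then show False using nc has_cycle_mono a(1,2) by blast
  qed
  have "\<not> has_cycle G (\<phi> ` I)"
  proof
    assume "has_cycle G (\<phi> ` I)"
    then obtain es vs where c: "es \<noteq> []" "length vs = length es" "distinct es" "distinct vs"
      "set es \<subseteq> \<phi> ` I"
      "\<forall>j < length es. edge_joins G (es ! j) (vs ! j) (vs ! ((j + 1) mod length es))"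
      unfolding has_cycle_def by blast
    define es' where "es' = map (inv_into I \<phi>) es"
    have kk: "keyf G (inv_into I \<phi> x) = keyf G x" if "x \<in> \<phi> ` I" for x
      using \<phi>[OF inv_into_into[OF that]] f_inv_into_f[OF that] by simp
    have "has_cycle G I" unfolding has_cycle_def
    proof (intro exI conjI)
      show "es' \<noteq> []" "length vs = length es'" using c by (auto simp: es'_def)
      show "distinct es'" unfolding es'_def using c(3,5)
        by (simp add: distinct_map inj_on_inv_into)
      show "set es' \<subseteq> I" unfolding es'_def using c(5) by (auto intro: inv_into_into)
      show "distinct vs" by (rule c(4))
      show "\<forall>j < length es'. edge_joins G (es' ! j) (vs ! j) (vs ! ((j + 1) mod length es'))"
      proof (intro allI impI)
        fix j assume j: "j < length es'"
        then have "es ! j \<in> \<phi> ` I" using c(5) by (auto simp: es'_def)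
        then show "edge_joins G (es' ! j) (vs ! j) (vs ! ((j + 1) mod length es'))"
          using c(6) j kk[of "es ! j"] edge_joins_key[of G "inv_into I \<phi> (es ! j)" "es ! j"]
          by (simp add: es'_def)
      qed
    qed
    then show False using nc by simp
  qed
  moreover have "\<phi> ` I \<subseteq> Y" using \<phi> by auto
  ultimately have "card (\<phi> ` I) \<le> graphic_rank n G Y"
    using Y by (intro rank_ge) (auto simp: graphic_indep_def)
  then show ?thesis using I(3) card_image[OF inj] by simp
qed

lemma keys_bound:
  assumes "matroid_rank n G = r"
  shows "card (keyf G ` {i. i < n \<and> \<not> isloop G i}) \<le> 4 * r ^ 2"
proof -
  obtain F where F: "F \<subseteq> {0..<n}" "graphic_indep n G F" "card F = r"
    using rank_attained[of "{0..<n}" n G] assms by (auto simp: matroid_rank_def)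
  have finF: "finite F" using F(1) finite_subset by blast
  define V where "V = (fst \<circ> G) ` F \<union> (snd \<circ> G) ` F"
  have cV: "card V \<le> 2 * r"
  proof -
    have "card V \<le> card ((fst \<circ> G) ` F) + card ((snd \<circ> G) ` F)" unfolding V_def by (rule card_Un_le)
    also have "\<dots> \<le> card F + card F" using card_image_le[OF finF] by (intro add_mono) auto
    finally show ?thesis using F(3) by simp
  qed
  have finV: "finite V" using finF by (simp add: V_def)
  have inV: "u \<in> V \<and> v \<in> V" if "edge_joins G f u v" "f \<in> F" for f u v
    using that unfolding edge_joins_def V_def by (auto simp: image_iff) (metis fst_conv snd_conv)+
  have nc: "\<not> has_cycle G F" using F(2) by (simp add: graphic_indep_def)
  have endp: "fst (G i) \<in> V \<and> snd (G i) \<in> V" if i: "i < n" "\<not> isloop G i" for i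
  proof (cases "i \<in> F")
    case True then show ?thesis by (auto simp: V_def)
  next
    case False
    have "\<not> graphic_indep n G (insert i F)"
    proof
      assume "graphic_indep n G (insert i F)"
      then have "card (insert i F) \<le> graphic_rank n G {0..<n}" using F(1) i by (intro rank_ge) auto
      then show False using assms F(3) False finF by (simp add: matroid_rank_def)
    qed
    then have "has_cycle G (insert i F)" using F(1) i by (auto simp: graphic_indep_def)
    then obtain es vs where c: "es \<noteq> []" "length vs = length es" "distinct es" "distinct vs"
      "set es \<subseteq> insert i F"
      "\<forall>j < length es. edge_joins G (es ! j) (vs ! j) (vs ! ((j + 1) mod length es))"
      unfolding has_cycle_def by blast
    define k where "k = length es"
    have "i \<in> set es"
    proof (rule ccontr)
      assume "i \<notin> set es"
      then have "set es \<subseteq> F" using c(5) by auto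
      then have "has_cycle G F" unfolding has_cycle_def using c by blast
      then show False using nc by simp
    qed
    then obtain p where p: "p < k" "es ! p = i" by (auto simp: in_set_conv_nth k_def)
    have "k \<noteq> 1"
    proof
      assume "k = 1"
      then have "edge_joins G i (vs ! 0) (vs ! 0)" using c(6) p by (auto simp: k_def)
      then show False using i(2) by (auto simp: edge_joins_def isloop_def)
    qed
    then have k2: "k \<ge> 2" using c(1) by (cases k) (auto simp: k_def)
    have allv: "vs ! q \<in> V" if q: "q < k" for q
    proof -
      define q0 where "q0 = (if q = 0 then k - 1 else q - 1)"
      have q0: "q0 < k" "q0 \<noteq> q" "(q0 + 1) mod k = q" using q k2 by (auto simp: q0_def)
      have "es ! q \<noteq> es ! q0" using c(3) q q0 by (simp add: nth_eq_iff_index_eq k_def)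
      moreover have "es ! q \<in> insert i F"
        using c(5) nth_mem[of q es] q unfolding k_def by blast
      moreover have "es ! q0 \<in> insert i F"
        using c(5) nth_mem[of q0 es] q0(1) unfolding k_def by blast
      ultimately have "es ! q \<in> F \<or> es ! q0 \<in> F" by auto
      moreover have "edge_joins G (es ! q) (vs ! q) (vs ! ((q + 1) mod k))"
        using c(6) q by (simp add: k_def)
      moreover have "edge_joins G (es ! q0) (vs ! q0) (vs ! q)"
        using c(6) q0 by (metis k_def)
      ultimately show ?thesis using inV by blast
    qed
    have "edge_joins G i (vs ! p) (vs ! ((p + 1) mod k))" using c(6) p unfolding k_def by metis
    moreover have "vs ! p \<in> V" "vs ! ((p + 1) mod k) \<in> V" using allv p k2 by auto
    ultimately show ?thesis unfolding edge_joins_def by auto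
  qed
  have "keyf G ` {i. i < n \<and> \<not> isloop G i} \<subseteq> V \<times> V"
    using endp by (auto simp: keyf_def min_def max_def)
  then have "card (keyf G ` {i. i < n \<and> \<not> isloop G i}) \<le> card (V \<times> V)"
    using finV by (intro card_mono) auto
  also have "\<dots> = card V * card V" by (simp add: card_cartesian_product)
  also have "\<dots> \<le> (2 * r) * (2 * r)" using cV by (intro mult_mono) auto
  finally show ?thesis by (simp add: power2_eq_square)
qed


lemma parity_half:
  assumes C: "finite C" and a: "a \<in> C" "a \<in> X"
  shows "2 * card {T \<in> Pow C. even (card (T \<inter> X))} = 2 ^ card C"
proof -
  define E where "E = {T \<in> Pow C. even (card (T \<inter> X))}"
  define Od where "Od = {T \<in> Pow C. odd (card (T \<inter> X))}"
  define h where "h T = (if a \<in> T then T - {a} else insert a T)" for T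
  have fin: "\<And>T. T \<in> Pow C \<Longrightarrow> finite (T \<inter> X)" using C by (auto intro: finite_subset)
  have flip: "even (card (h T \<inter> X)) \<longleftrightarrow> odd (card (T \<inter> X))" if "T \<in> Pow C" for T
  proof (cases "a \<in> T")
    case True
    then have "h T \<inter> X = (T \<inter> X) - {a}" by (auto simp: h_def)
    moreover have "card (T \<inter> X) \<ge> 1" using True a fin[OF that]
      by (metis IntI card_0_eq empty_iff less_one not_le)
    ultimately show ?thesis using True a fin[OF that] by (auto simp: card_Diff_singleton)
  next
    case False
    then have "h T \<inter> X = insert a (T \<inter> X)" using a by (auto simp: h_def)
    then show ?thesis using False fin[OF that] by simp
  qed
  have hh: "h (h T) = T" for T by (auto simp: h_def)
  have hP: "h T \<in> Pow C" if "T \<in> Pow C" for T using that a by (auto simp: h_def)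
  have "bij_betw h E Od"
  proof (rule bij_betw_byWitness[where f' = h])
    show "h ` E \<subseteq> Od" using hP flip by (auto simp: E_def Od_def)
    show "h ` Od \<subseteq> E" using hP flip by (auto simp: E_def Od_def)
  qed (auto simp: hh)
  then have "card E = card Od" by (rule bij_betw_same_card)
  moreover have "E \<union> Od = Pow C" "E \<inter> Od = {}" by (auto simp: E_def Od_def)
  moreover have "finite E" "finite Od" using C by (auto simp: E_def Od_def)
  ultimately have "card E + card E = card (Pow C)" by (metis card_Un_disjoint)
  then show ?thesis using C by (simp add: card_Pow E_def)
qed

lemma prob_even:
  assumes C: "finite C" and ne: "C \<inter> X \<noteq> {}"
  shows "measure_pmf.prob (pmf_of_set (Pow C)) {T. \<not> chi T X} = 1/2"
proof -
  obtain a where a: "a \<in> C" "a \<in> X" using ne by auto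
  have "measure_pmf.prob (pmf_of_set (Pow C)) {T. \<not> chi T X}
        = card {T \<in> Pow C. even (card (T \<inter> X))} / card (Pow C)"
    using C by (subst measure_pmf_of_set) (auto simp: chi_def Int_def)
  also have "\<dots> = 1/2"
  proof -
    have "real (2 * card {T \<in> Pow C. even (card (T \<inter> X))}) = real (2 ^ card C)"
      using parity_half[OF C a] by simp
    then show ?thesis using C by (simp add: card_Pow field_simps)
  qed
  finally show ?thesis .
qed


lemma sketch_general:
  fixes n m t :: nat and cls :: "nat \<Rightarrow> nat set" and f :: "nat set \<Rightarrow> real"
  assumes cls: "\<And>j. j < m \<Longrightarrow> cls j \<subseteq> {0..<n}"
    and finv: "\<And>X Y. X \<subseteq> {0..<n} \<Longrightarrow> Y \<subseteq> {0..<n} \<Longrightarrow>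
                 (\<forall>j<m. (X \<inter> cls j = {}) = (Y \<inter> cls j = {})) \<Longrightarrow> f X = f Y"
    and mt: "3 * real m \<le> 2 ^ t"
  shows "sketch_exists n f (1/3) (m*t)"
proof -
  define I where "I = {0..<m} \<times> {0..<t}"
  have finI: "finite I" by (simp add: I_def)
  define p where "p x = pmf_of_set (Pow (cls (fst x) \<inter> {0..<n}))" for x :: "nat \<times> nat"
  define P where "P = Pi_pmf I {} p"
  define idx where "idx = map (\<lambda>q. (q div t, q mod t)) [0..<m*t]"
  define D where "D = map_pmf (\<lambda>F. map F idx) P"
  define pres where "pres X = {j. j < m \<and> X \<inter> cls j \<noteq> {}}" for X
  define dec where "dec b = {j. j < m \<and> (\<exists>s<t. b ! (j*t+s))}" for b :: "bool list"
  define g where "g b = f (SOME Y. Y \<subseteq> {0..<n} \<and> pres Y = dec b)" for b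
  have setp: "set_pmf (p x) = Pow (cls (fst x) \<inter> {0..<n})" for x
    unfolding p_def by (rule set_pmf_of_set) auto
  have setP: "set_pmf P = PiE_dflt I {} (set_pmf \<circ> p)"
    unfolding P_def by (rule set_Pi_pmf[OF finI])
  have inP: "F x \<subseteq> cls (fst x) \<inter> {0..<n}" if "F \<in> set_pmf P" "x \<in> I" for F x
  proof -
    have "F x \<in> set_pmf (p x)" using that unfolding setP PiE_dflt_def by (cases x) auto
    then show ?thesis unfolding setp by blast
  qed
  have idxI: "x \<in> I" if xin: "x \<in> set idx" for x
  proof -
    obtain q where q: "q < m * t" "x = (q div t, q mod t)" using xin unfolding idx_def set_map set_upt by auto
    then have "t > 0" by (cases t) auto
    then show ?thesis using q by (auto simp: I_def less_mult_imp_div_less)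
  qed
  have lt: "j * t + s < m * t" if "j < m" "s < t" for j s
  proof -
    have "j * t + s < j * t + t" using that by simp
    also have "\<dots> = Suc j * t" by simp
    also have "\<dots> \<le> m * t" using that by (intro mult_right_mono) auto
    finally show ?thesis .
  qed
  have idx_nth: "idx ! (j * t + s) = (j, s)" if "j < m" "s < t" for j s
    using that lt[OF that] by (simp add: idx_def)
  have lenidx: "length idx = m * t" by (simp add: idx_def)
  show ?thesis unfolding sketch_exists_def
  proof (intro exI[of _ D] exI[of _ g] conjI allI impI)
    show "\<forall>Ss\<in>set_pmf D. length Ss = m * t \<and> (\<forall>S\<in>set Ss. S \<subseteq> {0..<n})"
    proof
      fix Ss assume "Ss \<in> set_pmf D"
      then obtain F where F: "F \<in> set_pmf P" "Ss = map F idx" by (auto simp: D_def)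
      show "length Ss = m * t \<and> (\<forall>S\<in>set Ss. S \<subseteq> {0..<n})" using F inP idxI lenidx by fastforce
    qed
  next
    fix X :: "nat set" assume X: "X \<subseteq> {0..<n}"
    define Bad where "Bad = (\<Union>j\<in>pres X. {F. \<forall>s<t. \<not> chi (F (j, s)) X})"
    define Good where "Good = {F. g (map (\<lambda>S. chi S X) (map F idx)) = f X}"
    have good: "F \<in> Good" if F: "F \<in> set_pmf P" "F \<notin> Bad" for F
    proof -
      define b where "b = map (\<lambda>S. chi S X) (map F idx)"
      have bnth: "b ! (j * t + s) = chi (F (j, s)) X" if "j < m" "s < t" for j s
        using that lt[OF that] idx_nth[OF that] lenidx by (simp add: b_def)
      have "dec b = pres X"
      proof (intro set_eqI iffI)
        fix j assume "j \<in> pres X"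
        then show "j \<in> dec b" using F(2) bnth by (auto simp: Bad_def dec_def pres_def)
      next
        fix j assume "j \<in> dec b"
        then obtain s where js: "j < m" "s < t" "chi (F (j, s)) X" using bnth by (auto simp: dec_def)
        then have "F (j, s) \<inter> X \<noteq> {}" by (auto simp: chi_def)
        moreover have "F (j, s) \<subseteq> cls j" using inP[OF F(1), of "(j, s)"] js by (auto simp: I_def)
        ultimately show "j \<in> pres X" using js by (auto simp: pres_def)
      qed
      then have ex: "\<exists>Y. Y \<subseteq> {0..<n} \<and> pres Y = dec b" using X by auto
      define Y where "Y = (SOME Y. Y \<subseteq> {0..<n} \<and> pres Y = dec b)"
      have Y: "Y \<subseteq> {0..<n}" "pres Y = pres X"
        using someI_ex[OF ex] \<open>dec b = pres X\<close> unfolding Y_def by auto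
      have "\<forall>j<m. (X \<inter> cls j = {}) = (Y \<inter> cls j = {})"
      proof (intro allI impI)
        fix j assume "j < m"
        then show "(X \<inter> cls j = {}) = (Y \<inter> cls j = {})"
          using Y(2) unfolding pres_def by blast
      qed
      then have "f Y = f X" using finv[OF Y(1) X] by simp
      then show ?thesis unfolding Good_def g_def mem_Collect_eq b_def[symmetric] Y_def[symmetric] .
    qed
    have "measure_pmf.prob P (UNIV - Bad) \<le> measure_pmf.prob P Good"
      using good by (intro measure_pmf.finite_measure_mono_AE) (auto simp: AE_measure_pmf_iff)
    moreover have "measure_pmf.prob P (UNIV - Bad) = 1 - measure_pmf.prob P Bad"
      using measure_pmf.prob_compl[of Bad P] by simp
    moreover have "measure_pmf.prob P Bad \<le> 1/3"
    proof -
      have each: "measure_pmf.prob P {F. \<forall>s<t. \<not> chi (F (j, s)) X} = (1/2) ^ t"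
        if j: "j \<in> pres X" for j
      proof -
        define B where "B x = (if fst x = j then {T. \<not> chi T X} else UNIV)" for x :: "nat \<times> nat"
        have jm: "j < m" "X \<inter> cls j \<noteq> {}" using j by (auto simp: pres_def)
        have "{F. \<forall>s<t. \<not> chi (F (j, s)) X} = Pi I B"
          using jm by (auto simp: I_def B_def Pi_def)
        then have "measure_pmf.prob P {F. \<forall>s<t. \<not> chi (F (j, s)) X}
              = (\<Prod>x\<in>I. measure_pmf.prob (p x) (B x))"
          unfolding P_def using measure_Pi_pmf_Pi[OF finI] by simp
        also have "\<dots> = (\<Prod>x\<in>I. (if fst x = j then 1/2 else 1))"
        proof (rule prod.cong[OF refl])
          fix x assume x: "x \<in> I"
          show "measure_pmf.prob (p x) (B x) = (if fst x = j then 1/2 else 1)"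
          proof (cases "fst x = j")
            case True
            have "cls j \<inter> {0..<n} = cls j" using cls[OF jm(1)] by auto
            moreover have "finite (cls j)" using cls[OF jm(1)] finite_subset by blast
            moreover have "cls j \<inter> X \<noteq> {}" using jm(2) by blast
            ultimately show ?thesis using True prob_even[of "cls j" X]
              by (simp add: B_def p_def)
          qed (simp add: B_def)
        qed
        also have "\<dots> = (1/2) ^ card (I \<inter> {x. fst x = j})"
          using finI by (simp add: prod.If_cases)
        also have "I \<inter> {x. fst x = j} = {j} \<times> {0..<t}" using jm by (auto simp: I_def)
        finally show ?thesis by (simp add: card_cartesian_product)
      qed
      have "measure_pmf.prob P Bad \<le> (\<Sum>j\<in>pres X. measure_pmf.prob P {F. \<forall>s<t. \<not> chi (F (j, s)) X})"
        unfolding Bad_def by (rule measure_pmf.finite_measure_subadditive_finite) (auto simp: pres_def)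
      also have "\<dots> = real (card (pres X)) * (1/2) ^ t" using each by simp
      also have "\<dots> \<le> real m * (1/2) ^ t"
      proof -
        have "card (pres X) \<le> card {0..<m}" by (intro card_mono) (auto simp: pres_def)
        then show ?thesis by (intro mult_right_mono) auto
      qed
      also have "\<dots> = real m / 2 ^ t" by (simp add: power_one_over)
      also have "\<dots> \<le> 1/3" using mt by (simp add: field_simps)
      finally show ?thesis .
    qed
    ultimately have "measure_pmf.prob P Good \<ge> 1 - 1/3" by linarith
    then show "measure_pmf.prob D {Ss. g (map (\<lambda>S. chi S X) Ss) = f X} \<ge> 1 - 1/3"
      by (simp add: D_def Good_def vimage_def)
  qed
qed


lemma t_bounds:
  fixes r :: nat assumes r2: "2 \<le> r"
  defines "t \<equiv> nat \<lceil>log 2 (12 * (real r)^2)\<rceil>"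
  shows "12 * (real r)^2 \<le> 2 ^ t" and "real t \<le> 21/2 * ln (real r)"
proof -
  define y where "y = 12 * (real r)^2"
  have "1 \<le> (real r)^2" using r2 by (intro one_le_power) simp
  then have y1: "y \<ge> 1" by (simp add: y_def)
  have ly: "log 2 y \<ge> 0" using y1 by simp
  have tge: "real t \<ge> log 2 y" unfolding t_def y_def[symmetric] using ly by linarith
  have "y = 2 powr (log 2 y)" using y1 by simp
  also have "\<dots> \<le> 2 powr (real t)" using tge by (intro powr_mono) auto
  also have "\<dots> = 2 ^ t" by (simp add: powr_realpow)
  finally show "12 * (real r)^2 \<le> 2 ^ t" by (simp add: y_def)
  have tle: "real t \<le> log 2 y + 1" unfolding t_def y_def[symmetric] using ly by linarith
  have ln2: "2/3 \<le> ln (2::real)" by (rule ln2_ge_two_thirds)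
  have lnr: "ln (2::real) \<le> ln (real r)" using r2 by simp
  have "log 2 y = log 2 12 + 2 * log 2 (real r)"
    using r2 by (simp add: y_def log_mult log_nat_power)
  moreover have "log 2 12 \<le> (4::real)"
  proof -
    have "log 2 (12::real) \<le> log 2 16" by simp
    also have "log 2 (16::real) = log 2 (2 ^ 4)" by simp
    also have "\<dots> = 4" by (subst log_nat_power) auto
    finally show ?thesis .
  qed
  moreover have "log 2 (real r) \<le> 3/2 * ln (real r)"
  proof -
    have "log 2 (real r) = ln (real r) / ln 2" by (simp add: log_def)
    also have "\<dots> \<le> ln (real r) / (2/3)" using ln2 lnr
      by (intro divide_left_mono) auto
    finally show ?thesis by simp
  qed
  ultimately show "real t \<le> 21/2 * ln (real r)" using tle ln2 lnr by linarith
qed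

theorem mainTheorem5:
  shows "\<exists>C::real. \<forall>(r::nat) (n::nat) (G::multigraph).
           r \<ge> 2 \<longrightarrow> matroid_rank n G = r \<longrightarrow>
           real (R_lin n (\<lambda>X. real (graphic_rank n G X)) (1/3)) \<le> C * (real r)^2 * ln (real r)"
proof (intro exI[of _ 50] allI impI)
  fix r n :: nat and G :: multigraph
  assume r2: "2 \<le> r" and rk: "matroid_rank n G = r"
  define K where "K = keyf G ` {i. i < n \<and> \<not> isloop G i}"
  have finK: "finite K" by (simp add: K_def)
  define kl where "kl = (SOME xs. set xs = K \<and> distinct xs)"
  have kl: "set kl = K \<and> distinct kl" unfolding kl_def
    by (rule someI_ex) (use finite_distinct_list[OF finK] in auto)
  define m where "m = length kl"
  have setkl: "set kl = K" using kl by simp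
  have "m = card K" using kl distinct_card[of kl] by (simp add: m_def)
  then have mK: "m \<le> 4 * r ^ 2" using keys_bound[OF rk] by (simp add: K_def)
  define cls where "cls j = {i. i < n \<and> \<not> isloop G i \<and> keyf G i = kl ! j}" for j
  define t where "t = nat \<lceil>log 2 (12 * (real r)^2)\<rceil>"
  have t1: "12 * (real r)^2 \<le> 2 ^ t" and t2: "real t \<le> 21/2 * ln (real r)"
    using t_bounds[OF r2] by (simp_all add: t_def)
  have mt: "3 * real m \<le> 2 ^ t"
  proof -
    have "real m \<le> 4 * (real r)^2" using mK by (metis of_nat_le_iff of_nat_mult of_nat_numeral of_nat_power)
    then show ?thesis using t1 by linarith
  qed
  have cov: "\<forall>i\<in>X. i < n \<longrightarrow> \<not> isloop G i \<longrightarrow> (\<exists>i'\<in>Y. keyf G i' = keyf G i)"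
    if pat: "\<forall>j<m. (X \<inter> cls j = {}) = (Y \<inter> cls j = {})" for X Y
  proof (intro ballI impI)
    fix i assume i: "i \<in> X" "i < n" "\<not> isloop G i"
    then have "keyf G i \<in> set kl" using setkl by (auto simp: K_def)
    then obtain j where j: "j < m" "kl ! j = keyf G i" by (auto simp: in_set_conv_nth m_def)
    then have "i \<in> X \<inter> cls j" using i by (auto simp: cls_def)
    then have "Y \<inter> cls j \<noteq> {}" using pat j(1) by blast
    then show "\<exists>i'\<in>Y. keyf G i' = keyf G i" using j(2) by (auto simp: cls_def)
  qed
  have sk: "sketch_exists n (\<lambda>X. real (graphic_rank n G X)) (1/3) (m * t)"
  proof (rule sketch_general[OF _ _ mt])
    show "cls j \<subseteq> {0..<n}" for j by (auto simp: cls_def)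
  next
    fix X Y assume XY: "X \<subseteq> {0..<n}" "Y \<subseteq> {0..<n}"
      and pat: "\<forall>j<m. (X \<inter> cls j = {}) = (Y \<inter> cls j = {})"
    have pat': "\<forall>j<m. (Y \<inter> cls j = {}) = (X \<inter> cls j = {})" using pat by simp
    have "graphic_rank n G X \<le> graphic_rank n G Y" by (rule rank_mono_key[OF XY(2) cov[OF pat]])
    moreover have "graphic_rank n G Y \<le> graphic_rank n G X" by (rule rank_mono_key[OF XY(1) cov[OF pat']])
    ultimately show "real (graphic_rank n G X) = real (graphic_rank n G Y)" by simp
  qed
  have "R_lin n (\<lambda>X. real (graphic_rank n G X)) (1/3) \<le> m * t"
    unfolding R_lin_def by (rule Least_le[where P = "\<lambda>k. sketch_exists n (\<lambda>X. real (graphic_rank n G X)) (1/3) k", OF sk])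
  then have "real (R_lin n (\<lambda>X. real (graphic_rank n G X)) (1/3)) \<le> real m * real t"
    by (metis of_nat_le_iff of_nat_mult)
  also have "\<dots> \<le> (4 * (real r)^2) * (21/2 * ln (real r))"
  proof (rule mult_mono)
    show "real m \<le> 4 * (real r)^2" using mK by (metis of_nat_le_iff of_nat_mult of_nat_numeral of_nat_power)
  qed (use t2 in auto)
  also have "\<dots> \<le> 50 * (real r)^2 * ln (real r)"
  proof -
    have "ln (real r) \<ge> 0" using r2 by simp
    then show ?thesis by (simp add: mult_right_mono algebra_simps)
  qed
  finally show "real (R_lin n (\<lambda>X. real (graphic_rank n G X)) (1/3)) \<le> 50 * (real r)^2 * ln (real r)" .
qed
end
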